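(* Let $M$ be a von Neumann algebra, let $a,b\in M$ with $0\le a,b\le 1$, and let $p$ be a projection in $M$. (a) If $a,b\in pMp$, then $a$ and $b$ are absolutely compatible in $M$ if, and only if, they are absolutely compatible in the von Neumann algebra $pMp$ (with unit $p$). (b) If $a,b\in pMp\oplus(1-p)M(1-p)$, then $a$ and $b$ are absolutely compatible in $M$ if, and only if, $pap$ and $pbp$ are absolutely compatible in $pMp$ and $(1-p)a(1-p)$ and $(1-p)b(1-p)$ are absolutely compatible in $(1-p)M(1-p)$.
   Context: For $x$ in a C$^*$-algebra, $|x|=(x^*x)^{1/2}$. In a unital C$^*$-algebra with unit $e$, elements $0\le a,b\le e$ are absolutely compatible if $|a-b|+|e-a-b|=e$. *)

theory Defs
  imports "HOL-Analysis.Analysis"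
begin

text \<open>A unital complex C*-algebra, encoded on top of a real unital Banach algebra:
  the complex scalar i acts as multiplication by a central element iunit with
  iunit * iunit = -1; the norm is required to be complex-homogeneous; adj is the
  involution (conjugate-linear, anti-multiplicative) and the C*-identity holds.\<close>

class cstar_algebra = real_normed_algebra_1 + banach +
  fixes adj :: "'a \<Rightarrow> 'a"
    and iunit :: "'a"
  assumes adj_adj: "adj (adj x) = x"
    and adj_add: "adj (x + y) = adj x + adj y"
    and adj_scaleR: "adj (r *\<^sub>R x) = r *\<^sub>R adj x"
    and adj_mult: "adj (x * y) = adj y * adj x"
    and iunit_sq: "iunit * iunit = - 1"
    and iunit_central: "iunit * x = x * iunit"
    and adj_iunit: "adj iunit = - iunit"
    and norm_complex_scale:
      "norm ((a *\<^sub>R 1 + b *\<^sub>R iunit) * x) = sqrt (a\<^sup>2 + b\<^sup>2) * norm x"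
    and cstar_identity: "norm (adj x * x) = (norm x)\<^sup>2"

definition clinear_fun :: "('a::cstar_algebra \<Rightarrow> complex) \<Rightarrow> bool" where
  "clinear_fun f \<longleftrightarrow> (\<forall>x y. f (x + y) = f x + f y) \<and>
     (\<forall>r x. f (r *\<^sub>R x) = complex_of_real r * f x) \<and>
     (\<forall>x. f (iunit * x) = \<i> * f x)"

definition bounded_clinear_fun :: "('a::cstar_algebra \<Rightarrow> complex) \<Rightarrow> bool" where
  "bounded_clinear_fun f \<longleftrightarrow> clinear_fun f \<and> (\<exists>K. \<forall>x. cmod (f x) \<le> K * norm x)"

text \<open>V is a predual of M: a norm-closed subspace of the Banach dual of M such that
  the canonical map M \<rightarrow> V* is an isometric surjection onto the bounded
  linear functionals on V.  By Sakai's theorem a C*-algebra admits a predual iff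
  it is a W*-algebra, i.e. (isomorphic to) a von Neumann algebra.\<close>
definition is_predual :: "('a::cstar_algebra \<Rightarrow> complex) set \<Rightarrow> bool" where
  "is_predual V \<longleftrightarrow>
     V \<subseteq> {f. bounded_clinear_fun f} \<and>
     (\<lambda>x. 0) \<in> V \<and>
     (\<forall>f\<in>V. \<forall>g\<in>V. (\<lambda>x. f x + g x) \<in> V) \<and>
     (\<forall>c. \<forall>f\<in>V. (\<lambda>x. c * f x) \<in> V) \<and>
     (\<forall>F g. (\<forall>n. F n \<in> V) \<and> bounded_clinear_fun g \<and>
            (\<lambda>n. onorm (\<lambda>x. F n x - g x)) \<longlonglongrightarrow> 0 \<longrightarrow> g \<in> V) \<and>
     (\<forall>x. norm x = (SUP f\<in>{f\<in>V. onorm f \<le> 1}. cmod (f x))) \<and>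
     (\<forall>\<phi> :: ('a \<Rightarrow> complex) \<Rightarrow> complex.
        (\<forall>f\<in>V. \<forall>g\<in>V. \<phi> (\<lambda>x. f x + g x) = \<phi> f + \<phi> g) \<and>
        (\<forall>c. \<forall>f\<in>V. \<phi> (\<lambda>x. c * f x) = c * \<phi> f) \<and>
        (\<exists>K. \<forall>f\<in>V. cmod (\<phi> f) \<le> K * onorm f)
        \<longrightarrow> (\<exists>x. \<forall>f\<in>V. \<phi> f = f x))"

definition von_neumann_algebra :: "'a::cstar_algebra itself \<Rightarrow> bool" where
  "von_neumann_algebra TYPE('a) \<longleftrightarrow> (\<exists>V :: ('a \<Rightarrow> complex) set. is_predual V)"

definition projection :: "'a::cstar_algebra \<Rightarrow> bool" where
  "projection p \<longleftrightarrow> adj p = p \<and> p * p = p"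

definition corner :: "'a::cstar_algebra \<Rightarrow> 'a set" where
  "corner p = {p * x * p | x. True}"

text \<open>Positivity inside a C*-subalgebra S (used with S = UNIV and S = corner p):
  y is positive in S iff y = z* z for some z in S.\<close>
definition positive_in :: "'a::cstar_algebra set \<Rightarrow> 'a \<Rightarrow> bool" where
  "positive_in S y \<longleftrightarrow> (\<exists>z\<in>S. y = adj z * z)"

definition le_in :: "'a::cstar_algebra set \<Rightarrow> 'a \<Rightarrow> 'a \<Rightarrow> bool" where
  "le_in S a b \<longleftrightarrow> positive_in S (b - a)"

definition abs_in :: "'a::cstar_algebra set \<Rightarrow> 'a \<Rightarrow> 'a" where
  "abs_in S x = (THE y. positive_in S y \<and> y * y = adj x * x)"

definition abs_compatible_in :: "'a::cstar_algebra set \<Rightarrow> 'a \<Rightarrow> 'a \<Rightarrow> 'a \<Rightarrow> bool" where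
  "abs_compatible_in S e a b \<longleftrightarrow> abs_in S (a - b) + abs_in S (e - a - b) = e"

end

theory Submission
  imports Defs "HOL-Complex_Analysis.Complex_Analysis"
begin


lemma adj_zero[simp]: "adj (0::'a::cstar_algebra) = 0"
  using adj_scaleR[of 0 0] by simp

lemma adj_minus[simp]: "adj (- x) = - adj (x::'a::cstar_algebra)"
  using adj_scaleR[of "-1" x] by simp

lemma adj_diff[simp]: "adj (x - y) = adj x - adj (y::'a::cstar_algebra)"
  using adj_add[of x "-y"] by simp

lemma adj_one[simp]: "adj 1 = (1::'a::cstar_algebra)"
proof -
  have "adj (adj 1 * (1::'a)) = adj 1 * adj (adj 1)" by (rule adj_mult)
  then show ?thesis by (simp add: adj_adj)
qed

lemma adj_of_real[simp]: "adj (of_real r) = (of_real r::'a::cstar_algebra)"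
  by (simp add: of_real_def adj_scaleR)

lemma norm_adj_le: "norm x \<le> norm (adj (x::'a::cstar_algebra))"
proof (cases "x = 0")
  case True then show ?thesis by simp
next
  case False
  have "(norm x)^2 = norm (adj x * x)" by (simp add: cstar_identity)
  also have "\<dots> \<le> norm (adj x) * norm x" by (rule norm_mult_ineq)
  finally have "norm x * norm x \<le> norm (adj x) * norm x" by (simp add: power2_eq_square)
  then show ?thesis using False by simp
qed

lemma norm_adj[simp]: "norm (adj x) = norm (x::'a::cstar_algebra)"
  using norm_adj_le[of x] norm_adj_le[of "adj x"] by (simp add: adj_adj)

lemma bounded_linear_adj: "bounded_linear (adj::'a::cstar_algebra\<Rightarrow>'a)"
  by (rule bounded_linear_intro[where K=1]) (auto simp: adj_add adj_scaleR)

lemma adj_sum: "adj (sum f A) = sum (\<lambda>i. adj (f i::'a::cstar_algebra)) A"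
  by (induct A rule: infinite_finite_induct) (auto simp: adj_add)

lemma adj_power: "adj (x ^ n) = adj (x::'a::cstar_algebra) ^ n"
proof (induct n)
  case (Suc n)
  have "adj (x ^ Suc n) = adj (x * x^n)" by (simp only: power_Suc)
  also have "\<dots> = adj x ^ n * adj x" by (simp add: adj_mult Suc)
  finally show ?case by (metis power_Suc power_Suc2)
qed simp

lemma iunit_right: "x * iunit = iunit * (x::'a::cstar_algebra)"
  by (simp add: iunit_central)

definition cs :: "complex \<Rightarrow> 'a::cstar_algebra" where
  "cs z = Re z *\<^sub>R 1 + Im z *\<^sub>R iunit"

lemma cs_add: "cs (z + w) = cs z + (cs w::'a::cstar_algebra)"
  by (simp add: cs_def scaleR_add_left)

lemma cs_mult: "cs (z * w) = cs z * (cs w::'a::cstar_algebra)"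
  by (simp add: cs_def algebra_simps iunit_sq scaleR_add_left scaleR_diff_left)

lemma cs_central: "cs z * x = x * (cs z::'a::cstar_algebra)"
  by (simp add: cs_def algebra_simps iunit_central)

lemma cs_zero[simp]: "cs 0 = (0::'a::cstar_algebra)" by (simp add: cs_def)
lemma cs_one[simp]: "cs 1 = (1::'a::cstar_algebra)" by (simp add: cs_def)
lemma cs_minus: "cs (- z) = - (cs z::'a::cstar_algebra)" by (simp add: cs_def)
lemma cs_diff: "cs (z - w) = cs z - (cs w::'a::cstar_algebra)" by (simp add: cs_def algebra_simps)
lemma cs_of_real: "cs (complex_of_real r) = (of_real r::'a::cstar_algebra)" by (simp add: cs_def of_real_def)
lemma cs_ii: "cs \<i> = (iunit::'a::cstar_algebra)" by (simp add: cs_def)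

lemma adj_cs: "adj (cs z) = (cs (cnj z)::'a::cstar_algebra)"
  by (simp add: cs_def adj_add adj_scaleR adj_iunit)

lemma norm_cs_mult: "norm (cs z * x) = cmod z * norm (x::'a::cstar_algebra)"
  using norm_complex_scale[of "Re z" "Im z" x] by (simp add: cs_def cmod_def)

lemma norm_cs: "norm (cs z::'a::cstar_algebra) = cmod z"
  using norm_cs_mult[of z 1] by simp

lemma cs_scaleR: "cs (complex_of_real r * z) = r *\<^sub>R (cs z::'a::cstar_algebra)"
  by (simp add: cs_def scaleR_add_right)

lemma herm_norm_sq:
  fixes h :: "'a::cstar_algebra" assumes "adj h = h" shows "norm (h * h) = (norm h)^2"
  using cstar_identity[of h] assms by simp

lemma herm_norm_pow2:
  fixes h :: "'a::cstar_algebra" assumes "adj h = h" shows "norm (h ^ (2^k)) = (norm h)^(2^k)"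
proof (induct k)
  case (Suc k)
  have "adj (h ^ (2^k)) = h ^ (2^k)" by (simp add: adj_power assms)
  then have "norm (h^(2^k) * h^(2^k)) = (norm (h^(2^k)))^2" by (rule herm_norm_sq)
  moreover have "h^(2^k) * h^(2^k) = h ^ (2^Suc k)" by (simp add: power_add[symmetric] mult_2)
  ultimately show ?case using Suc by (simp add: power_mult[symmetric] mult.commute)
qed simp


definition inv_pair :: "'a::cstar_algebra \<Rightarrow> 'a \<Rightarrow> bool" where
  "inv_pair x y \<longleftrightarrow> x * y = 1 \<and> y * x = 1"

definition isinv :: "'a::cstar_algebra \<Rightarrow> bool" where
  "isinv x \<longleftrightarrow> (\<exists>y. inv_pair x y)"

lemma inv_pair_unique: "inv_pair x y \<Longrightarrow> inv_pair x y' \<Longrightarrow> y = y'"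
  unfolding inv_pair_def by (metis mult.assoc mult_1_left mult_1_right)

lemma inv_pair_mult: "inv_pair a a' \<Longrightarrow> inv_pair b b' \<Longrightarrow> inv_pair (a * b) (b' * a')"
  unfolding inv_pair_def by (metis mult.assoc mult_1_left)

lemma isinv_mult: "isinv a \<Longrightarrow> isinv b \<Longrightarrow> isinv (a * b)"
  unfolding isinv_def using inv_pair_mult by blast

lemma inv_pair_minus: "inv_pair x y \<Longrightarrow> inv_pair (- x) (- y)"
  unfolding inv_pair_def by simp

lemma isinv_minus: "isinv x \<Longrightarrow> isinv (- x)"
  unfolding isinv_def using inv_pair_minus by blast

lemma isinv_minus_iff: "isinv (- x) \<longleftrightarrow> isinv x"
  using isinv_minus[of x] isinv_minus[of "-x"] by auto

lemma inv_pair_cs: "z \<noteq> 0 \<Longrightarrow> inv_pair (cs z :: 'a::cstar_algebra) (cs (1/z))"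
  unfolding inv_pair_def by (simp add: cs_mult[symmetric])

lemma isinv_cs: "z \<noteq> 0 \<Longrightarrow> isinv (cs z :: 'a::cstar_algebra)"
  unfolding isinv_def using inv_pair_cs by blast

lemma isinv_one[simp]: "isinv (1::'a::cstar_algebra)"
  unfolding isinv_def inv_pair_def by auto

lemma neumann:
  fixes e :: "'a::cstar_algebra"
  assumes "norm e < 1"
  shows "summable (\<lambda>n. e^n)" "(1 - e) * (\<Sum>n. e^n) = 1" "(\<Sum>n. e^n) * (1 - e) = 1"
    "norm (\<Sum>n. e^n) \<le> 1 / (1 - norm e)"
proof -
  have g: "summable (\<lambda>n. norm e ^ n)" using assms by (simp add: summable_geometric)
  have sn: "summable (\<lambda>n. norm (e^n))"
    by (rule summable_comparison_test[OF _ g]) (auto intro: norm_power_ineq)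
  then show s: "summable (\<lambda>n. e^n)" by (rule summable_norm_cancel)
  have h: "(\<Sum>n. e^n) = 1 + (\<Sum>n. e^(Suc n))"
    using suminf_split_head[OF s] by simp
  have "(\<Sum>n. e^(Suc n)) = e * (\<Sum>n. e^n)"
    using suminf_mult[OF s, of e] by simp
  moreover have "(\<Sum>n. e^(Suc n)) = (\<Sum>n. e^n) * e"
    using suminf_mult2[OF s, of e] by (simp add: power_commutes)
  ultimately show "(1 - e) * (\<Sum>n. e^n) = 1" "(\<Sum>n. e^n) * (1 - e) = 1"
    using h by (simp_all add: algebra_simps)
  have "norm (\<Sum>n. e^n) \<le> (\<Sum>n. norm (e^n))" by (rule summable_norm[OF sn])
  also have "\<dots> \<le> (\<Sum>n. norm e ^ n)"
    by (rule suminf_le[OF _ sn g]) (auto intro: norm_power_ineq)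
  also have "\<dots> = 1 / (1 - norm e)" using assms by (simp add: suminf_geometric)
  finally show "norm (\<Sum>n. e^n) \<le> 1 / (1 - norm e)" .
qed

lemma norm_mult3: "norm (a * b * c) \<le> norm a * norm b * norm (c::'a::real_normed_algebra)"
proof -
  have "norm (a * b * c) \<le> norm (a * b) * norm c" by (rule norm_mult_ineq)
  also have "\<dots> \<le> norm a * norm b * norm c"
    by (intro mult_right_mono norm_mult_ineq) auto
  finally show ?thesis .
qed

lemma norm_mult4: "norm (a * b * c * d) \<le> norm a * norm b * norm c * norm (d::'a::real_normed_algebra)"
proof -
  have "norm (a * b * c * d) \<le> norm (a * b * c) * norm d" by (rule norm_mult_ineq)
  also have "\<dots> \<le> norm a * norm b * norm c * norm d"
    by (intro mult_right_mono norm_mult3) auto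
  finally show ?thesis .
qed

lemma perturb:
  fixes x0 y0 d :: "'a::cstar_algebra"
  assumes inv: "inv_pair x0 y0" and small: "norm d * norm y0 < 1"
  shows "\<exists>y. inv_pair (x0 + d) y \<and>
     norm (y - y0) \<le> norm d * (norm y0)^2 / (1 - norm d * norm y0) \<and>
     norm (y - y0 + y0 * d * y0) \<le> (norm d)^2 * (norm y0)^3 / (1 - norm d * norm y0)"
proof -
  define e where "e = - (y0 * d)"
  have ne: "norm e \<le> norm d * norm y0"
    unfolding e_def using norm_mult_ineq[of y0 d] by (simp add: mult.commute)
  then have ne1: "norm e < 1" using small by simp
  define N where "N = (\<Sum>n. e^n)"
  note nm = neumann[OF ne1, folded N_def]
  have x0y0: "x0 * y0 = 1" "y0 * x0 = 1" using inv by (auto simp: inv_pair_def)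
  have dec: "x0 + d = x0 * (1 - e)"
    unfolding e_def by (simp add: distrib_left mult.assoc[symmetric] x0y0)
  define y where "y = N * y0"
  have p1: "(x0 + d) * y = 1"
  proof -
    have "(x0 + d) * y = x0 * ((1 - e) * N) * y0" unfolding dec y_def by (simp only: mult.assoc)
    then show ?thesis using nm(2) x0y0 by simp
  qed
  have p2: "y * (x0 + d) = 1"
  proof -
    have "y * (x0 + d) = N * (y0 * x0) * (1 - e)" unfolding dec y_def by (simp only: mult.assoc)
    then show ?thesis using nm(3) x0y0 by simp
  qed
  have Neq: "N = 1 + e * N" using nm(2) by (simp add: algebra_simps)
  have Neq2: "N = 1 + e + e * e * N"
  proof -
    have "N = 1 + e * (1 + e * N)" using Neq by simp
    then show ?thesis by (simp add: distrib_left mult.assoc add.assoc)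
  qed
  have nN: "norm N \<le> 1 / (1 - norm d * norm y0)"
  proof -
    have "1 / (1 - norm e) \<le> 1 / (1 - norm d * norm y0)"
      using ne small ne1 by (intro divide_left_mono) auto
    then show ?thesis using nm(4) by linarith
  qed
  have e1: "y - y0 = e * N * y0"
  proof -
    have "y - y0 = (1 + e * N) * y0 - y0" unfolding y_def using Neq by simp
    then show ?thesis by (simp add: distrib_right)
  qed
  have "norm (y - y0) \<le> norm e * norm N * norm y0"
    unfolding e1 by (rule norm_mult3)
  also have "\<dots> \<le> (norm d * norm y0) * (1 / (1 - norm d * norm y0)) * norm y0"
    by (intro mult_right_mono mult_mono ne nN) auto
  finally have b1: "norm (y - y0) \<le> norm d * (norm y0)^2 / (1 - norm d * norm y0)"
    by (simp add: power2_eq_square)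
  have e2: "y - y0 + y0 * d * y0 = e * e * N * y0"
  proof -
    have "y - y0 + y0 * d * y0 = (1 + e + e * e * N) * y0 - y0 + y0 * d * y0"
      unfolding y_def using Neq2 by simp
    also have "\<dots> = e * y0 + y0 * d * y0 + e * e * N * y0" by (simp add: distrib_right)
    also have "e * y0 + y0 * d * y0 = 0" unfolding e_def by simp
    finally show ?thesis by simp
  qed
  have "norm (y - y0 + y0 * d * y0) \<le> norm e * norm e * norm N * norm y0"
    unfolding e2 by (rule norm_mult4)
  also have "\<dots> \<le> (norm d * norm y0) * (norm d * norm y0) * (1 / (1 - norm d * norm y0)) * norm y0"
    by (intro mult_right_mono mult_mono ne nN) auto
  finally have b2: "norm (y - y0 + y0 * d * y0) \<le> (norm d)^2 * (norm y0)^3 / (1 - norm d * norm y0)"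
    by (simp add: power2_eq_square power3_eq_cube algebra_simps)
  show ?thesis using p1 p2 b1 b2 by (auto simp: inv_pair_def)
qed

lemma isinv_neumann:
  fixes x :: "'a::cstar_algebra"
  assumes "norm x < cmod l"
  shows "isinv (cs l - x)"
proof -
  have l0: "l \<noteq> 0" using assms by auto
  have "norm (cs (1/l) * x) < 1"
    using assms l0 by (simp add: norm_cs_mult norm_divide field_simps)
  then have "isinv (1 - cs (1/l) * x)"
    using neumann(2,3) unfolding isinv_def inv_pair_def by blast
  moreover have "cs l - x = cs l * (1 - cs (1/l) * x)"
    using l0 by (simp add: right_diff_distrib mult.assoc[symmetric] cs_mult[symmetric])
  ultimately show ?thesis using isinv_mult isinv_cs l0 by metis
qed

lemma jacobson:
  fixes a b :: "'a::cstar_algebra"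
  assumes "isinv (1 - a * b)" shows "isinv (1 - b * a)"
proof -
  obtain u where u: "(1 - a*b) * u = 1" "u * (1 - a*b) = 1" using assms by (auto simp: isinv_def inv_pair_def)
  have "(1 - b*a) * (1 + b*u*a) = 1 - b*a + b * ((1 - a*b)*u) * a"
    by (simp add: algebra_simps)
  moreover have "(1 + b*u*a) * (1 - b*a) = 1 - b*a + b * (u * (1 - a*b)) * a"
    by (simp add: algebra_simps)
  ultimately show ?thesis using u unfolding isinv_def inv_pair_def by auto
qed

lemma jacobson_cs:
  fixes a b :: "'a::cstar_algebra"
  assumes "isinv (cs l - a * b)" "l \<noteq> 0" shows "isinv (cs l - b * a)"
proof -
  have e2: "cs l - b * a = cs l * (1 - b * (cs (1/l) * a))"
  proof -
    have "b * (cs (1/l) * a) = cs (1/l) * (b * a)"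
      by (metis cs_central mult.assoc)
    then show ?thesis using assms(2)
      by (simp add: right_diff_distrib mult.assoc[symmetric] cs_mult[symmetric])
  qed
  have "isinv (1 - (cs (1/l) * a) * b)"
  proof -
    have "1 - (cs (1/l) * a) * b = cs (1/l) * (cs l - a * b)"
      using assms(2) by (simp add: right_diff_distrib mult.assoc[symmetric] cs_mult[symmetric])
    then show ?thesis using assms isinv_mult isinv_cs by (metis divide_eq_0_iff one_neq_zero)
  qed
  then have "isinv (1 - b * (cs (1/l) * a))" by (rule jacobson)
  then show ?thesis unfolding e2 using isinv_mult isinv_cs assms(2) by metis
qed

lemma herm_real_spec:
  fixes h :: "'a::cstar_algebra"
  assumes h: "adj h = h" and im: "Im l \<noteq> 0"
  shows "isinv (cs l - h)"
proof (rule ccontr)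
  assume ni: "\<not> isinv (cs l - h)"
  have key: "(Im l + t)^2 \<le> (norm h)^2 + t^2" for t
  proof -
    have eq: "cs (l + \<i> * complex_of_real t) - (h + cs (\<i> * complex_of_real t)) = cs l - h"
      by (simp add: cs_add)
    have "\<not> norm (h + cs (\<i> * complex_of_real t)) < cmod (l + \<i> * complex_of_real t)"
      using isinv_neumann[of "h + cs (\<i> * complex_of_real t)" "l + \<i> * complex_of_real t"] ni eq by auto
    then have A: "cmod (l + \<i> * complex_of_real t) \<le> norm (h + cs (\<i> * complex_of_real t))" by simp
    have "(Im l + t)^2 \<le> (cmod (l + \<i> * complex_of_real t))^2"
      by (simp add: cmod_def)
    also have "\<dots> \<le> (norm (h + cs (\<i> * complex_of_real t)))^2"
      using A by (simp add: power_mono)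
    also have "\<dots> = norm (adj (h + cs (\<i> * complex_of_real t)) * (h + cs (\<i> * complex_of_real t)))"
      by (simp add: cstar_identity)
    also have "adj (h + cs (\<i> * complex_of_real t)) * (h + cs (\<i> * complex_of_real t)) = h * h + of_real (t^2)"
    proof -
      define c :: 'a where "c = cs (\<i> * complex_of_real t)"
      have "adj (h + c) = h - c"
        unfolding c_def by (simp add: adj_add adj_cs h cs_minus)
      moreover have "c * c = - of_real (t^2)"
      proof -
        have "c * c = cs ((\<i> * complex_of_real t) * (\<i> * complex_of_real t))"
          unfolding c_def by (simp only: cs_mult)
        also have "(\<i> * complex_of_real t) * (\<i> * complex_of_real t) = - complex_of_real (t^2)"
          by (simp add: power2_eq_square algebra_simps)
        finally show ?thesis by (simp only: cs_minus cs_of_real)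
      qed
      moreover have "c * h = h * c" unfolding c_def by (rule cs_central)
      moreover have "(h - c) * (h + c) = h * h + (h * c - c * h) - c * c"
        by (simp add: algebra_simps)
      ultimately show ?thesis unfolding c_def[symmetric] by simp
    qed
    also have "norm (h * h + of_real (t^2)) \<le> norm (h*h) + norm (of_real (t^2) :: 'a)"
      by (rule norm_triangle_ineq)
    also have "\<dots> \<le> (norm h)^2 + t^2"
    proof -
      have "norm (of_real (t^2) :: 'a) = t^2" by (simp only: norm_of_real) simp
      then show ?thesis using norm_mult_ineq[of h h] by (simp add: power2_eq_square)
    qed
    finally show ?thesis .
  qed
  define t where "t = ((norm h)^2 + 1) / (2 * Im l)"
  have "2 * t * Im l = (norm h)^2 + 1" using im unfolding t_def by simp
  moreover have "(Im l + t)^2 = (Im l)^2 + 2 * t * Im l + t^2" by (simp add: power2_eq_square algebra_simps)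
  ultimately show False using key[of t] by (smt (verit) zero_le_power2)
qed


definition ainv :: "'a::cstar_algebra \<Rightarrow> 'a" where
  "ainv x = (THE y. inv_pair x y)"

lemma ainv: "isinv x \<Longrightarrow> inv_pair x (ainv x)"
  unfolding ainv_def isinv_def using inv_pair_unique by (metis theI)

lemma ainv_eq: "inv_pair x y \<Longrightarrow> ainv x = y"
  using ainv inv_pair_unique isinv_def by blast

lemma bcf_bounded_linear:
  assumes "bounded_clinear_fun f" shows "bounded_linear f"
proof -
  from assms obtain K where K: "\<And>x. cmod (f x) \<le> K * norm x" and l: "clinear_fun f"
    unfolding bounded_clinear_fun_def by auto
  show ?thesis
  proof (rule bounded_linear_intro[where K=K])
    show "f (x + y) = f x + f y" for x y using l by (simp add: clinear_fun_def)
    show "f (r *\<^sub>R x) = r *\<^sub>R f x" for r x using l by (simp add: clinear_fun_def scaleR_conv_of_real)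
    show "norm (f x) \<le> norm x * K" for x using K[of x] by (simp add: mult.commute)
  qed
qed

lemma bcf_cs:
  assumes "bounded_clinear_fun f" shows "f (cs z * x) = z * f x"
proof -
  have l: "clinear_fun f" using assms by (simp add: bounded_clinear_fun_def)
  have "cs z * x = Re z *\<^sub>R x + Im z *\<^sub>R (iunit * x)"
    by (simp add: cs_def algebra_simps)
  then have "f (cs z * x) = complex_of_real (Re z) * f x + complex_of_real (Im z) * (\<i> * f x)"
    using l by (simp add: clinear_fun_def)
  also have "\<dots> = (complex_of_real (Re z) + \<i> * complex_of_real (Im z)) * f x"
    by (simp add: distrib_right mult.assoc)
  also have "\<dots> = z * f x" by (simp add: complex_eq[symmetric])
  finally show ?thesis .
qed

lemma predual_norming:
  fixes x :: "'a::cstar_algebra"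
  assumes V: "is_predual V" and b: "\<And>f. f \<in> V \<Longrightarrow> onorm f \<le> 1 \<Longrightarrow> cmod (f x) \<le> C"
  shows "norm x \<le> C"
proof -
  have n: "norm x = (SUP f\<in>{f\<in>V. onorm f \<le> 1}. cmod (f x))" using V by (simp add: is_predual_def)
  have z: "(\<lambda>x. 0) \<in> {f\<in>V. onorm f \<le> 1}" using V by (simp add: is_predual_def onorm_zero)
  show ?thesis unfolding n by (rule cSUP_least) (use z b in auto)
qed

lemma predual_bcf: "is_predual V \<Longrightarrow> f \<in> V \<Longrightarrow> bounded_clinear_fun f"
  by (auto simp: is_predual_def)

lemma G_local:
  fixes h :: "'a::cstar_algebra"
  assumes inv: "isinv (1 - cs m * h)" and small: "cmod d * norm h * norm (ainv (1 - cs m * h)) < 1"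
  shows "isinv (1 - cs (m + d) * h)"
    "norm (ainv (1 - cs (m + d) * h) - ainv (1 - cs m * h))
       \<le> cmod d * norm h * (norm (ainv (1 - cs m * h)))^2 / (1 - cmod d * norm h * norm (ainv (1 - cs m * h)))"
    "norm (ainv (1 - cs (m + d) * h) - ainv (1 - cs m * h) - cs d * (ainv (1 - cs m * h) * h * ainv (1 - cs m * h)))
       \<le> (cmod d * norm h)^2 * (norm (ainv (1 - cs m * h)))^3 / (1 - cmod d * norm h * norm (ainv (1 - cs m * h)))"
proof -
  let ?y0 = "ainv (1 - cs m * h)"
  have i0: "inv_pair (1 - cs m * h) ?y0" using ainv[OF inv] .
  have nd: "norm (- (cs d * h)) = cmod d * norm h" by (simp add: norm_cs_mult)
  have sm: "norm (- (cs d * h)) * norm ?y0 < 1" using small nd by simp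
  obtain y where y: "inv_pair (1 - cs m * h + - (cs d * h)) y"
    "norm (y - ?y0) \<le> norm (- (cs d * h)) * (norm ?y0)^2 / (1 - norm (- (cs d * h)) * norm ?y0)"
    "norm (y - ?y0 + ?y0 * - (cs d * h) * ?y0) \<le> (norm (- (cs d * h)))^2 * (norm ?y0)^3 / (1 - norm (- (cs d * h)) * norm ?y0)"
    using perturb[OF i0 sm] by blast
  have e: "1 - cs m * h + - (cs d * h) = 1 - cs (m + d) * h" by (simp add: cs_add algebra_simps)
  have yy: "ainv (1 - cs (m + d) * h) = y" using y(1) e ainv_eq by metis
  show "isinv (1 - cs (m + d) * h)" using y(1) e unfolding isinv_def by metis
  show "norm (ainv (1 - cs (m + d) * h) - ?y0)
       \<le> cmod d * norm h * (norm ?y0)^2 / (1 - cmod d * norm h * norm ?y0)"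
    using y(2) nd yy by simp
  have "?y0 * - (cs d * h) * ?y0 = - (cs d * (?y0 * h * ?y0))"
  proof -
    have "?y0 * (cs d * h) * ?y0 = cs d * (?y0 * h * ?y0)"
      by (metis cs_central mult.assoc)
    then show ?thesis by simp
  qed
  then show "norm (ainv (1 - cs (m + d) * h) - ?y0 - cs d * (?y0 * h * ?y0))
       \<le> (cmod d * norm h)^2 * (norm ?y0)^3 / (1 - cmod d * norm h * norm ?y0)"
    using y(3) nd yy by simp
qed


lemma cs_power_mult: "(cs z * h) ^ n = cs (z ^ n) * (h::'a::cstar_algebra) ^ n"
proof (induct n)
  case (Suc n)
  have "(cs z * h) ^ Suc n = (cs z * h) * (cs (z ^ n) * h ^ n)" using Suc by simp
  also have "\<dots> = (cs z * cs (z ^ n)) * (h * h ^ n)"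
    by (metis cs_central mult.assoc)
  also have "\<dots> = cs (z ^ Suc n) * h ^ Suc n" by (simp add: cs_mult[symmetric])
  finally show ?case .
qed simp

lemma bcf_diff:
  assumes "bounded_clinear_fun f" shows "f (a - b) = f a - f b"
proof -
  have l: "clinear_fun f" using assms by (simp add: bounded_clinear_fun_def)
  have "f (a - b) = f (a + (-1) *\<^sub>R b)" by simp
  also have "\<dots> = f a + f ((-1) *\<^sub>R b)" using l unfolding clinear_fun_def by blast
  also have "f ((-1) *\<^sub>R b) = complex_of_real (-1) * f b" using l unfolding clinear_fun_def by blast
  finally show ?thesis by simp
qed

lemma spec_radius:
  fixes h :: "'a::cstar_algebra"
  assumes vN: "von_neumann_algebra TYPE('a)" and h: "adj h = h" and r0: "0 \<le> \<rho>"
    and inv: "\<And>l. \<rho> < cmod l \<Longrightarrow> isinv (cs l - h)"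
  shows "norm h \<le> \<rho>"
proof (rule ccontr)
  assume "\<not> norm h \<le> \<rho>"
  then have hr: "\<rho> < norm h" by simp
  then have hpos: "0 < norm h" using r0 by linarith
  obtain V :: "('a \<Rightarrow> complex) set" where V: "is_predual V" using vN unfolding von_neumann_algebra_def by auto
  define s where "s = 2 / (norm h + \<rho>)"
  have hp: "0 < norm h + \<rho>" using hpos r0 by linarith
  have s0: "0 < s" using hp unfolding s_def by simp
  have sh: "1 < s * norm h" using hr hp unfolding s_def by (simp add: field_simps)
  have sr: "s * \<rho> < 1" using hr hp unfolding s_def by (simp add: field_simps)
  define U where "U = {m::complex. cmod m * \<rho> < 1}"
  have openU: "open U" unfolding U_def by (intro open_Collect_less continuous_intros)
  have cballU: "cball 0 s \<subseteq> U"
  proof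
    fix m :: complex assume "m \<in> cball 0 s"
    then have "cmod m \<le> s" by simp
    then have "cmod m * \<rho> \<le> s * \<rho>" using r0 by (simp add: mult_right_mono)
    then show "m \<in> U" using sr unfolding U_def by simp
  qed
  have invU: "isinv (1 - cs m * h)" if "m \<in> U" for m
  proof (cases "m = 0")
    case True then show ?thesis by simp
  next
    case False
    have "\<rho> < cmod (1/m)"
      using that False unfolding U_def by (simp add: norm_divide field_simps)
    then have "isinv (cs (1/m) - h)" by (rule inv)
    moreover have "1 - cs m * h = cs m * (cs (1/m) - h)"
      using False by (simp add: right_diff_distrib mult.assoc[symmetric] cs_mult[symmetric])
    ultimately show ?thesis using isinv_mult isinv_cs False by metis
  qed
  define G where "G m = ainv (1 - cs m * h)" for m
  have evsmall: "eventually (\<lambda>x. cmod (x - m) * norm h * norm (G m) < 1) (at m)" for m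
  proof -
    have "((\<lambda>x. cmod (x - m) * norm h * norm (G m)) \<longlongrightarrow> cmod (m - m) * norm h * norm (G m)) (at m)"
      by (intro tendsto_intros)
    then have "((\<lambda>x. cmod (x - m) * norm h * norm (G m)) \<longlongrightarrow> 0) (at m)" by simp
    then show ?thesis by (rule order_tendstoD) simp
  qed
  have contG: "isCont G m" if mU: "m \<in> U" for m
  proof -
    let ?g = "\<lambda>x. cmod (x - m) * norm h * (norm (G m))^2 / (1 - cmod (x - m) * norm h * norm (G m))"
    have "eventually (\<lambda>x. norm (G x - G m) \<le> ?g x) (at m)"
      using evsmall[of m]
    proof eventually_elim
      case (elim x)
      show ?case using G_local(2)[OF invU[OF mU], of "x - m"] elim unfolding G_def by simp
    qed
    moreover have "(?g \<longlongrightarrow> cmod (m - m) * norm h * (norm (G m))^2 / (1 - cmod (m - m) * norm h * norm (G m))) (at m)"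
      by (intro tendsto_intros) simp
    then have "(?g \<longlongrightarrow> 0) (at m)" by simp
    ultimately have "((\<lambda>x. G x - G m) \<longlongrightarrow> 0) (at m)" by (rule Lim_null_comparison)
    then show ?thesis unfolding isCont_def by (rule LIM_zero_cancel)
  qed
  have derivG: "((\<lambda>m. f (G m)) has_field_derivative f (G m * h * G m)) (at m)"
    if mU: "m \<in> U" and f: "bounded_clinear_fun f" for m f
  proof -
    have bl: "bounded_linear f" using f by (rule bcf_bounded_linear)
    let ?D = "f (G m * h * G m)"
    let ?g = "\<lambda>x. onorm f * (cmod (x - m) * (norm h)^2 * (norm (G m))^3 / (1 - cmod (x - m) * norm h * norm (G m)))"
    have ne: "eventually (\<lambda>x. x \<noteq> m) (at m)" by (simp add: eventually_at_filter)
    have "eventually (\<lambda>x. norm ((f (G x) - f (G m)) / (x - m) - ?D) \<le> ?g x) (at m)"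
      using evsmall[of m] ne
    proof eventually_elim
      case (elim x)
      let ?d = "x - m"
      let ?E = "G x - G m - cs ?d * (G m * h * G m)"
      have E: "norm ?E \<le> (cmod ?d * norm h)^2 * (norm (G m))^3 / (1 - cmod ?d * norm h * norm (G m))"
        using G_local(3)[OF invU[OF mU], of ?d] elim unfolding G_def by simp
      have d0: "?d \<noteq> 0" using elim by simp
      have fE: "f ?E = f (G x) - f (G m) - ?d * ?D"
        by (simp only: bcf_diff[OF f] bcf_cs[OF f])
      have "(f (G x) - f (G m)) / ?d - ?D = f ?E / ?d"
        unfolding fE using d0 by (simp add: field_simps)
      then have "norm ((f (G x) - f (G m)) / ?d - ?D) = norm (f ?E) / cmod ?d"
        by (simp add: norm_divide)
      also have "\<dots> \<le> onorm f * norm ?E / cmod ?d"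
        using d0 by (intro divide_right_mono onorm[OF bl]) auto
      also have "\<dots> \<le> onorm f * ((cmod ?d * norm h)^2 * (norm (G m))^3 / (1 - cmod ?d * norm h * norm (G m))) / cmod ?d"
        using d0 by (intro divide_right_mono mult_left_mono E onorm_pos_le[OF bl]) auto
      also have "\<dots> = ?g x"
      proof -
        have q: "1 - cmod ?d * norm h * norm (G m) \<noteq> 0" using elim by simp
        have c: "cmod ?d \<noteq> 0" using d0 by simp
        show ?thesis using q c by (simp add: power2_eq_square field_simps)
      qed
      finally show ?case .
    qed
    moreover have "(?g \<longlongrightarrow> onorm f * (cmod (m - m) * (norm h)^2 * (norm (G m))^3 / (1 - cmod (m - m) * norm h * norm (G m)))) (at m)"
      by (intro tendsto_intros) simp
    then have "(?g \<longlongrightarrow> 0) (at m)" by simp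
    ultimately have "((\<lambda>x. (f (G x) - f (G m)) / (x - m) - ?D) \<longlongrightarrow> 0) (at m)"
      by (rule Lim_null_comparison)
    then have "((\<lambda>x. (f (G x) - f (G m)) / (x - m)) \<longlongrightarrow> ?D) (at m)"
      by (rule LIM_zero_cancel)
    then show ?thesis by (simp add: has_field_derivative_iff)
  qed
  have holo: "(\<lambda>m. f (G m)) holomorphic_on U" if f: "bounded_clinear_fun f" for f
    unfolding holomorphic_on_def field_differentiable_def
    using derivG[OF _ f] has_field_derivative_at_within by blast
  obtain M where M: "\<And>x. x \<in> sphere 0 s \<Longrightarrow> norm (G x) \<le> M"
  proof -
    have "sphere 0 s \<subseteq> U" using cballU by auto
    then have "continuous_on (sphere 0 s) G"
      using contG by (intro continuous_at_imp_continuous_on) auto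
    then have "compact (G ` sphere 0 s)" by (intro compact_continuous_image) auto
    then have "bounded (G ` sphere 0 s)" by (rule compact_imp_bounded)
    then obtain a where a: "\<forall>y\<in>G ` sphere 0 s. norm y \<le> a" unfolding bounded_iff by blast
    show ?thesis by (rule that[of a]) (use a in blast)
  qed
  have coef: "cmod (f (h ^ n)) \<le> M / s ^ n" if fV: "f \<in> V" and fo: "onorm f \<le> 1" for f n
  proof -
    have f: "bounded_clinear_fun f" using predual_bcf[OF V fV] .
    have bl: "bounded_linear f" using f by (rule bcf_bounded_linear)
    define F where "F = Abs_fps (\<lambda>n. f (h ^ n))"
    have bnd: "cmod (f (h ^ n)) \<le> onorm f * norm h ^ n" for n
    proof -
      have "cmod (f (h ^ n)) \<le> onorm f * norm (h ^ n)" by (rule onorm[OF bl])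
      also have "\<dots> \<le> onorm f * norm h ^ n"
        by (intro mult_left_mono norm_power_ineq onorm_pos_le[OF bl])
      finally show ?thesis .
    qed
    have exp: "(\<lambda>m. f (G m)) has_fps_expansion F"
      unfolding has_fps_expansion_def
    proof
      define c where "c = 1 / (2 * norm h)"
      have c0: "0 < c" unfolding c_def using hpos by simp
      let ?z = "complex_of_real c"
      have "summable (\<lambda>n. f (h ^ n) * ?z ^ n)"
      proof (rule summable_norm_cancel, rule summable_comparison_test[where g = "\<lambda>n. onorm f * (1/2)^n"])
        show "summable (\<lambda>n. onorm f * (1/2::real)^n)"
          by (intro summable_mult summable_geometric) simp
        show "\<exists>N. \<forall>n\<ge>N. norm (norm (f (h ^ n) * ?z ^ n)) \<le> onorm f * (1/2)^n"
        proof (intro exI allI impI)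
          fix n :: nat
          have "norm (norm (f (h ^ n) * ?z ^ n)) = cmod (f (h ^ n)) * c^n"
            using c0 by (simp add: norm_mult norm_power)
          also have "\<dots> \<le> onorm f * norm h ^ n * c^n"
            by (intro mult_right_mono bnd) (use c0 in auto)
          also have "\<dots> = onorm f * (norm h * c)^n"
            by (simp add: power_mult_distrib)
          also have "norm h * c = 1/2" unfolding c_def using hpos by simp
          finally show "norm (norm (f (h ^ n) * ?z ^ n)) \<le> onorm f * (1/2)^n" .
        qed
      qed
      then have cr: "ereal (norm ?z) \<le> conv_radius (\<lambda>n. f (h ^ n))" by (rule conv_radius_geI)
      have "ereal 0 < ereal (norm ?z)" using c0 by simp
      then have "ereal 0 < conv_radius (\<lambda>n. f (h ^ n))" using cr by (rule less_le_trans)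
      then show "0 < fps_conv_radius F"
        unfolding fps_conv_radius_def F_def by (simp add: zero_ereal_def)
      show "\<forall>\<^sub>F z in nhds 0. eval_fps F z = f (G z)"
        unfolding eventually_nhds
      proof (intro exI conjI ballI)
        show "open (ball (0::complex) (1 / norm h))" by simp
        show "(0::complex) \<in> ball 0 (1 / norm h)" using hpos by simp
        fix z :: complex assume "z \<in> ball 0 (1 / norm h)"
        then have zl: "cmod z * norm h < 1" using hpos by (simp add: field_simps)
        let ?e = "cs z * h"
        have ne: "norm ?e < 1" using zl by (simp add: norm_cs_mult)
        note nm = neumann[OF ne]
        have "G z = (\<Sum>n. ?e ^ n)"
          unfolding G_def by (rule ainv_eq) (use nm in \<open>simp add: inv_pair_def\<close>)
        then have "f (G z) = (\<Sum>n. f (?e ^ n))"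
          using bounded_linear.suminf[OF bl nm(1)] by simp
        also have "\<dots> = (\<Sum>n. f (h ^ n) * z ^ n)"
          by (simp add: cs_power_mult bcf_cs[OF f] mult.commute)
        finally show "eval_fps F z = f (G z)" unfolding eval_fps_def F_def by simp
      qed
    qed
    have "fps_nth F n = (deriv ^^ n) (\<lambda>m. f (G m)) 0 / fact n"
      by (rule fps_nth_fps_expansion[OF exp])
    then have fn: "f (h ^ n) = (deriv ^^ n) (\<lambda>m. f (G m)) 0 / fact n" unfolding F_def by simp
    have M0: "0 \<le> M"
    proof -
      have "complex_of_real s \<in> sphere 0 s" using s0 by simp
      then show ?thesis using M[of "complex_of_real s"] by (meson norm_ge_zero order_trans)
    qed
    have "norm ((deriv ^^ n) (\<lambda>m. f (G m)) 0) \<le> fact n * M / s ^ n"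
    proof (rule Cauchy_inequality)
      show "(\<lambda>m. f (G m)) holomorphic_on ball 0 s"
        using holo[OF f] cballU by (meson ball_subset_cball holomorphic_on_subset order_trans)
      show "continuous_on (cball 0 s) (\<lambda>m. f (G m))"
        using holomorphic_on_imp_continuous_on[OF holo[OF f]] cballU by (rule continuous_on_subset)
      show "0 < s" by (rule s0)
      fix x :: complex assume "norm (0 - x) = s"
      then have xs: "x \<in> sphere 0 s" by simp
      have "norm (f (G x)) \<le> onorm f * norm (G x)" by (rule onorm[OF bl])
      also have "\<dots> \<le> 1 * M"
        by (intro mult_mono fo M xs) (auto intro: onorm_pos_le[OF bl])
      finally show "norm (f (G x)) \<le> M" by simp
    qed
    then have "norm ((deriv ^^ n) (\<lambda>m. f (G m)) 0) / fact n \<le> fact n * M / s ^ n / fact n"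
      by (intro divide_right_mono) auto
    also have "\<dots> = M / s ^ n" by simp
    finally show ?thesis unfolding fn by (simp add: norm_divide)
  qed
  have pw: "(s * norm h) ^ (2^k) \<le> M" for k
  proof -
    have "norm (h ^ (2^k)) \<le> M / s ^ (2^k)"
      by (rule predual_norming[OF V]) (rule coef)
    then have "norm h ^ (2^k) \<le> M / s ^ (2^k)" using herm_norm_pow2[OF h] by simp
    then show ?thesis using s0 by (simp add: power_mult_distrib field_simps)
  qed
  obtain k where k: "M < (s * norm h) ^ k" using real_arch_pow[OF sh] by blast
  have "(s * norm h) ^ k \<le> (s * norm h) ^ (2^k)"
    by (rule power_increasing) (use sh less_exp[of k] in auto)
  then show False using k pw[of k] by simp
qed


definition pos :: "'a::cstar_algebra \<Rightarrow> bool" where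
  "pos x \<longleftrightarrow> adj x = x \<and> (\<exists>r\<ge>0. norm (of_real r - x) \<le> r)"

lemma cs_real: "cs (complex_of_real a) = (of_real a :: 'a::cstar_algebra)"
  by (rule cs_of_real)

lemma posinv:
  fixes x :: "'a::cstar_algebra"
  assumes "pos x" "0 < t" shows "isinv (of_real t + x)"
proof -
  obtain r where r: "r \<ge> 0" "norm (of_real r - x) \<le> r" using assms(1) by (auto simp: pos_def)
  have "cmod (complex_of_real (t + r)) = t + r" using r(1) assms(2) by (simp only: norm_of_real)
  then have "norm (of_real r - x) < cmod (complex_of_real (t + r))" using r assms(2) by linarith
  then have "isinv (cs (complex_of_real (t + r)) - (of_real r - x))" by (rule isinv_neumann)
  moreover have "cs (complex_of_real (t + r)) - (of_real r - x) = of_real t + x"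
    by (simp only: cs_real) (simp add: algebra_simps)
  ultimately show ?thesis by metis
qed

lemma isinv_real_big:
  fixes x :: "'a::cstar_algebra"
  assumes "norm x < c" shows "isinv (of_real c - x)"
proof -
  have "norm x < cmod (complex_of_real c)" using assms by simp
  then have "isinv (cs (complex_of_real c) - x)" by (rule isinv_neumann)
  then show ?thesis by (simp add: cs_real)
qed

lemma real_or_nonreal:
  obtains (nonreal) "Im l \<noteq> 0" | (real) a where "l = complex_of_real a"
  by (metis complex_is_Real_iff Reals_cases)

lemma pos_norm:
  fixes x :: "'a::cstar_algebra"
  assumes vN: "von_neumann_algebra TYPE('a)" and p: "pos x" and t: "norm x \<le> t"
  shows "norm (of_real t - x) \<le> t"
proof (rule spec_radius[OF vN])
  have hx: "adj x = x" using p by (simp add: pos_def)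
  show hk: "adj (of_real t - x) = of_real t - x" by (simp add: hx)
  show "0 \<le> t" using t norm_ge_zero order_trans by blast
  fix l assume lt: "t < cmod l"
  show "isinv (cs l - (of_real t - x))"
  proof (cases l rule: real_or_nonreal)
    case nonreal then show ?thesis using herm_real_spec[OF hk] by simp
  next
    case (real a)
    have e: "cs l - (of_real t - x) = of_real (a - t) + x" by (simp add: real cs_real)
    show ?thesis
    proof (cases "a > t")
      case True
      then show ?thesis unfolding e by (intro posinv p) simp
    next
      case False
      then have "a < - t" using lt real by auto
      then have "norm x < t - a" using t norm_ge_zero[of x] by linarith
      then have "isinv (of_real (t - a) - x)" by (rule isinv_real_big)
      then have "isinv (- (of_real (t - a) - x))" by (rule isinv_minus)
      then show ?thesis unfolding e by (simp add: algebra_simps)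
    qed
  qed
qed

lemma pos_add: "pos x \<Longrightarrow> pos y \<Longrightarrow> pos (x + y)"
proof -
  assume px: "pos x" and py: "pos y"
  obtain r where r: "r \<ge> 0" "norm (of_real r - x) \<le> r" using px by (auto simp: pos_def)
  obtain s where s: "s \<ge> 0" "norm (of_real s - y) \<le> s" using py by (auto simp: pos_def)
  have "norm (of_real (r + s) - (x + y)) = norm ((of_real r - x) + (of_real s - y))"
    by (simp add: algebra_simps)
  also have "\<dots> \<le> r + s" using r s norm_triangle_ineq[of "of_real r - x" "of_real s - y"] by linarith
  finally show "pos (x + y)" using px py r s unfolding pos_def by (auto simp: adj_add intro!: exI[of _ "r + s"])
qed

lemma pos_scale: "pos x \<Longrightarrow> 0 \<le> c \<Longrightarrow> pos (c *\<^sub>R x)"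
proof -
  assume px: "pos x" and c: "0 \<le> c"
  obtain r where r: "r \<ge> 0" "norm (of_real r - x) \<le> r" using px by (auto simp: pos_def)
  have "of_real (c * r) - c *\<^sub>R x = c *\<^sub>R (of_real r - x)"
    by (simp add: of_real_def scaleR_diff_right)
  then have "norm (of_real (c * r) - c *\<^sub>R x) = c * norm (of_real r - x)"
    using c by simp
  also have "\<dots> \<le> c * r" using c r by (simp add: mult_left_mono)
  finally show "pos (c *\<^sub>R x)" using px r c unfolding pos_def by (auto simp: adj_scaleR intro!: exI[of _ "c * r"])
qed

lemma pos_zero_iff:
  fixes x :: "'a::cstar_algebra"
  assumes vN: "von_neumann_algebra TYPE('a)" and p: "pos x" and n: "pos (- x)"
  shows "x = 0"
proof -
  have hx: "adj x = x" using p by (simp add: pos_def)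
  have "norm x \<le> 0"
  proof (rule spec_radius[OF vN hx])
    fix l assume lt: "0 < cmod l"
    show "isinv (cs l - x)"
    proof (cases l rule: real_or_nonreal)
      case nonreal then show ?thesis using herm_real_spec[OF hx] by simp
    next
      case (real a)
      show ?thesis
      proof (cases "a > 0")
        case True
        have "isinv (of_real a + - x)" using posinv[OF n True] .
        then show ?thesis by (simp add: real cs_real)
      next
        case False
        then have "a < 0" using lt real by auto
        then have "isinv (of_real (- a) + x)" by (intro posinv[OF p]) simp
        then have "isinv (- (of_real (- a) + x))" by (rule isinv_minus)
        then show ?thesis by (simp add: real cs_real)
      qed
    qed
  qed simp
  then show ?thesis by simp
qed

lemma pos_sq:
  fixes h :: "'a::cstar_algebra"
  assumes vN: "von_neumann_algebra TYPE('a)" and hh: "adj h = h"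
  shows "pos (h * h)"
proof -
  let ?r = "norm (h * h)"
  have hk: "adj (of_real ?r - h * h) = of_real ?r - h * h" by (simp add: adj_mult hh)
  have "norm (of_real ?r - h * h) \<le> ?r"
  proof (rule spec_radius[OF vN hk])
    show "0 \<le> ?r" by simp
    fix l assume lt: "?r < cmod l"
    show "isinv (cs l - (of_real ?r - h * h))"
    proof (cases l rule: real_or_nonreal)
      case nonreal then show ?thesis using herm_real_spec[OF hk] by simp
    next
      case (real a)
      have e: "cs l - (of_real ?r - h * h) = of_real (a - ?r) + h * h" by (simp add: real cs_real)
      show ?thesis
      proof (cases "a > ?r")
        case True
        define c where "c = a - ?r"
        have c0: "0 < c" using True c_def by simp
        define j :: 'a where "j = cs (\<i> * complex_of_real (sqrt c))"
        have jj: "j * j = - of_real c"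
        proof -
          have "j * j = cs ((\<i> * complex_of_real (sqrt c)) * (\<i> * complex_of_real (sqrt c)))"
            unfolding j_def by (simp only: cs_mult)
          also have "(\<i> * complex_of_real (sqrt c)) * (\<i> * complex_of_real (sqrt c)) = - complex_of_real c"
            using c0 by (simp add: algebra_simps flip: of_real_mult)
          finally show ?thesis by (simp only: cs_minus cs_real)
        qed
        have jh: "j * h = h * j" unfolding j_def by (rule cs_central)
        have f: "(h + j) * (h - j) = of_real c + h * h"
          by (simp add: algebra_simps jj jh)
        have i1: "isinv (h + j)"
        proof -
          have "isinv (cs (- (\<i> * complex_of_real (sqrt c))) - h)"
            using c0 by (intro herm_real_spec hh) simp
          then have "isinv (- (cs (- (\<i> * complex_of_real (sqrt c))) - h))" by (rule isinv_minus)
          then show ?thesis unfolding j_def by (simp add: cs_minus)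
        qed
        have i2: "isinv (h - j)"
        proof -
          have "isinv (cs (\<i> * complex_of_real (sqrt c)) - h)"
            using c0 by (intro herm_real_spec hh) simp
          then have "isinv (- (cs (\<i> * complex_of_real (sqrt c)) - h))" by (rule isinv_minus)
          then show ?thesis unfolding j_def by simp
        qed
        show ?thesis unfolding e c_def[symmetric] f[symmetric] by (rule isinv_mult[OF i1 i2])
      next
        case False
        then have "a < - ?r" using lt real by auto
        then have "norm (h * h) < ?r - a" using norm_ge_zero[of "h * h"] by linarith
        then have "isinv (of_real (?r - a) - h * h)" by (rule isinv_real_big)
        then have "isinv (- (of_real (?r - a) - h * h))" by (rule isinv_minus)
        then show ?thesis unfolding e by (simp add: algebra_simps)
      qed
    qed
  qed
  then show ?thesis unfolding pos_def using hh by (auto simp: adj_mult intro!: exI[of _ ?r])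
qed


lemma pos_uu:
  fixes u :: "'a::cstar_algebra"
  assumes vN: "von_neumann_algebra TYPE('a)"
  shows "pos (adj u * u + u * adj u)"
proof -
  define j :: 'a where "j = cs (- \<i>)"
  have jj: "j * j = - 1" unfolding j_def by (simp flip: cs_mult add: cs_minus)
  have jc: "\<And>x. j * x = x * j" unfolding j_def by (rule cs_central)
  have aj: "adj j = - j" unfolding j_def by (simp add: adj_cs cs_minus)
  define a where "a = (u + adj u)"
  define b where "b = j * (u - adj u)"
  have ha: "adj a = a" unfolding a_def by (simp add: adj_add adj_adj add.commute)
  have hb: "adj b = b"
    unfolding b_def by (simp add: adj_mult aj adj_adj jc algebra_simps)
  have bb: "b * b = - ((u - adj u) * (u - adj u))"
  proof -
    have "b * b = (j * j) * ((u - adj u) * (u - adj u))"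
      unfolding b_def by (metis jc mult.assoc)
    then show ?thesis by (simp add: jj)
  qed
  have "a * a + b * b = 2 *\<^sub>R (adj u * u + u * adj u)"
    unfolding bb a_def by (simp add: algebra_simps scaleR_2)
  then have "adj u * u + u * adj u = (1/2) *\<^sub>R (a * a + b * b)" by simp
  moreover have "pos (a * a + b * b)" using pos_sq[OF vN ha] pos_sq[OF vN hb] by (rule pos_add)
  ultimately show ?thesis by (simp add: pos_scale)
qed

lemma neg_square_zero:
  fixes u w :: "'a::cstar_algebra"
  assumes vN: "von_neumann_algebra TYPE('a)" and hw: "adj w = w"
    and e: "adj u * u = - (w * w)"
  shows "u = 0" "w = 0"
proof -
  let ?P = "adj u * u"
  have hP: "adj ?P = ?P" by (simp add: adj_mult adj_adj)
  have pw: "pos (w * w)" by (rule pos_sq[OF vN hw])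
  have pQ: "pos (u * adj u)"
  proof -
    have eq: "u * adj u = (adj u * u + u * adj u) + w * w" using e by simp
    have "pos ((adj u * u + u * adj u) + w * w)" by (rule pos_add[OF pos_uu[OF vN] pw])
    then show ?thesis by (simp only: eq[symmetric])
  qed
  have "norm ?P \<le> 0"
  proof (rule spec_radius[OF vN hP])
    fix l assume lt: "0 < cmod l"
    show "isinv (cs l - ?P)"
    proof (cases l rule: real_or_nonreal)
      case nonreal then show ?thesis using herm_real_spec[OF hP] by simp
    next
      case (real a)
      show ?thesis
      proof (cases "a > 0")
        case True
        have "isinv (of_real a + w * w)" using posinv[OF pw True] .
        then show ?thesis by (simp add: real cs_real e)
      next
        case False
        then have a0: "a < 0" using lt real by auto
        then have "isinv (of_real (- a) + u * adj u)" by (intro posinv[OF pQ]) simp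
        then have "isinv (- (of_real (- a) + u * adj u))" by (rule isinv_minus)
        then have "isinv (cs l - u * adj u)" by (simp add: real cs_real)
        then show ?thesis using jacobson_cs[of l u "adj u"] a0 real by auto
      qed
    qed
  qed simp
  then have P0: "?P = 0" by simp
  then have "(norm u)^2 = 0" using cstar_identity[of u] by simp
  then show "u = 0" by simp
  have "w * w = 0" using P0 e by simp
  then have "(norm w)^2 = 0" using herm_norm_sq[OF hw] by simp
  then show "w = 0" by simp
qed


definition bc :: "real \<Rightarrow> nat \<Rightarrow> real" where
  "bc a n = (-1)^n * (a gchoose n)"

lemma gch_rec: "(a gchoose Suc k) = (a gchoose k) * (a - of_nat k) / of_nat (Suc k)"
proof -
  have "fact (Suc k) * (a gchoose Suc k) = (\<Prod>i = 0..<Suc k. a - of_nat i)"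
    by (rule gbinomial_mult_fact)
  also have "\<dots> = (\<Prod>i = 0..<k. a - of_nat i) * (a - of_nat k)" by simp
  also have "\<dots> = fact k * (a gchoose k) * (a - of_nat k)" by (simp add: gbinomial_mult_fact)
  finally have eq: "fact (Suc k) * (a gchoose Suc k) = fact k * (a gchoose k) * (a - of_nat k)" .
  have "fact k * (of_nat (Suc k) * (a gchoose Suc k)) = fact (Suc k) * (a gchoose Suc k)"
    by (simp only: fact_Suc mult_ac)
  with eq have "fact k * (of_nat (Suc k) * (a gchoose Suc k)) = fact k * ((a gchoose k) * (a - of_nat k))"
    by (simp only: mult_ac)
  then have "of_nat (Suc k) * (a gchoose Suc k) = (a gchoose k) * (a - of_nat k)"
    by (subst (asm) mult_left_cancel) auto
  then show ?thesis by (simp add: eq_divide_eq mult.commute del: of_nat_Suc)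
qed

lemma bc_rec: "bc a (Suc n) = bc a n * (of_nat n - a) / of_nat (Suc n)"
  unfolding bc_def gch_rec by (simp add: field_simps del: of_nat_Suc)

lemma bc_0[simp]: "bc a 0 = 1" by (simp add: bc_def)

lemma bc_nonpos: assumes "0 \<le> a" "a \<le> 1" "n \<ge> 1" shows "bc a n \<le> 0"
  using assms(3)
proof (induct n)
  case (Suc n)
  show ?case
  proof (cases "n = 0")
    case True then show ?thesis using assms by (simp add: bc_def)
  next
    case False
    then have "bc a n \<le> 0" using Suc by simp
    moreover have "of_nat n - a \<ge> 0"
    proof -
      have "(1::real) \<le> of_nat n" using False by simp
      then show ?thesis using assms by linarith
    qed
    ultimately show ?thesis unfolding bc_rec by (simp add: divide_nonpos_pos mult_nonpos_nonneg)
  qed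
qed simp

lemma bc_shift_nonneg: assumes "a \<le> 1" shows "0 \<le> bc (a - 1) n"
proof (induct n)
  case (Suc n)
  have "of_nat n - (a - 1) \<ge> 0" using assms by simp
  then show ?case unfolding bc_rec using Suc by simp
qed simp

lemma bc_partial: "(\<Sum>k\<le>m. bc a k) = bc (a - 1) m"
  unfolding bc_def using gbinomial_sum_lower_neg[of a m] by (simp add: mult.commute)

lemma bc_abs_summable:
  assumes "0 \<le> a" "a \<le> 1" shows "summable (\<lambda>n. \<bar>bc a n\<bar>)"
proof (rule summableI_nonneg_bounded[where x = 2])
  show "0 \<le> \<bar>bc a n\<bar>" for n by simp
  show "(\<Sum>k<n. \<bar>bc a k\<bar>) \<le> 2" for n
  proof (cases n)
    case 0 then show ?thesis by simp
  next
    case (Suc m)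
    have "(\<Sum>k<n. \<bar>bc a k\<bar>) = (\<Sum>k\<le>m. \<bar>bc a k\<bar>)" using Suc lessThan_Suc_atMost by simp
    also have "\<dots> = (\<Sum>k\<le>m. (if k = 0 then 2 else 0) - bc a k)"
      by (rule sum.cong) (use bc_nonpos[OF assms] in auto)
    also have "\<dots> = 2 - (\<Sum>k\<le>m. bc a k)" by (simp add: sum_subtractf)
    also have "\<dots> \<le> 2" using bc_partial[of a m] bc_shift_nonneg[OF assms(2), of m] by simp
    finally show ?thesis .
  qed
qed

lemma bc_vandermonde: "(\<Sum>i\<le>n. bc a i * bc b (n - i)) = bc (a + b) n"
proof -
  have "(\<Sum>i\<le>n. bc a i * bc b (n - i)) = (\<Sum>i\<le>n. (-1)^n * ((a gchoose i) * (b gchoose (n - i))))"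
  proof (rule sum.cong)
    fix i assume "i \<in> {..n}"
    then have "(-1::real)^i * (-1)^(n - i) = (-1)^n" by (simp flip: power_add)
    then show "bc a i * bc b (n - i) = (-1)^n * ((a gchoose i) * (b gchoose (n - i)))"
      unfolding bc_def by (metis (no_types, lifting) mult.assoc mult.left_commute)
  qed simp
  also have "\<dots> = (-1)^n * (\<Sum>i\<le>n. (a gchoose i) * (b gchoose (n - i)))"
    by (simp add: sum_distrib_left)
  also have "(\<Sum>i\<le>n. (a gchoose i) * (b gchoose (n - i))) = (a + b) gchoose n"
    using gbinomial_Vandermonde[of a b n] by (simp add: atMost_atLeast0)
  finally show ?thesis by (simp add: bc_def)
qed

lemma bc_one_SS: "bc 1 (Suc (Suc m)) = 0"
proof (induct m)
  case 0 then show ?case using bc_rec[of 1 "Suc 0"] by simp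
next
  case (Suc m) then show ?case using bc_rec[of 1 "Suc (Suc m)"] by simp
qed

lemma bc_one: "bc 1 n = (if n = 0 then 1 else if n = 1 then -1 else 0)"
proof (cases n)
  case (Suc m)
  then show ?thesis by (cases m) (simp add: bc_def, simp only: bc_one_SS, simp)
qed simp


definition ser :: "real \<Rightarrow> 'a::cstar_algebra \<Rightarrow> 'a" where
  "ser a X = (\<Sum>n. bc a n *\<^sub>R X ^ n)"

lemma ser_summable_norm:
  fixes X :: "'a::cstar_algebra"
  assumes X: "norm X \<le> 1" and a: "0 \<le> a" "a \<le> 1"
  shows "summable (\<lambda>n. norm (bc a n *\<^sub>R X ^ n))"
proof (rule summable_comparison_test[OF _ bc_abs_summable[OF a]])
  show "\<exists>N. \<forall>n\<ge>N. norm (norm (bc a n *\<^sub>R X ^ n)) \<le> \<bar>bc a n\<bar>"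
  proof (intro exI allI impI)
    fix n :: nat
    have "norm (X ^ n) \<le> 1"
      using norm_power_ineq[of X n] X by (meson order_trans power_le_one norm_ge_zero)
    then show "norm (norm (bc a n *\<^sub>R X ^ n)) \<le> \<bar>bc a n\<bar>"
      by (simp add: mult_left_le)
  qed
qed

lemma ser_summable:
  fixes X :: "'a::cstar_algebra"
  assumes "norm X \<le> 1" "0 \<le> a" "a \<le> 1"
  shows "summable (\<lambda>n. bc a n *\<^sub>R X ^ n)"
  using summable_norm_cancel[OF ser_summable_norm[OF assms]] .

lemma ser_mult:
  fixes X :: "'a::cstar_algebra"
  assumes X: "norm X \<le> 1" and a: "0 \<le> a" and b: "0 \<le> b" and ab: "a + b \<le> 1"
  shows "ser a X * ser b X = ser (a + b) X"
proof -
  have a1: "a \<le> 1" and b1: "b \<le> 1" using a b ab by linarith+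
  have cp: "(\<lambda>k. \<Sum>i\<le>k. (bc a i *\<^sub>R X ^ i) * (bc b (k - i) *\<^sub>R X ^ (k - i))) sums (ser a X * ser b X)"
    unfolding ser_def
    by (rule Cauchy_product_sums[OF ser_summable_norm[OF X a a1] ser_summable_norm[OF X b b1]])
  have "(\<Sum>i\<le>k. (bc a i *\<^sub>R X ^ i) * (bc b (k - i) *\<^sub>R X ^ (k - i))) = bc (a + b) k *\<^sub>R X ^ k" for k
  proof -
    have "(\<Sum>i\<le>k. (bc a i *\<^sub>R X ^ i) * (bc b (k - i) *\<^sub>R X ^ (k - i)))
        = (\<Sum>i\<le>k. (bc a i * bc b (k - i)) *\<^sub>R X ^ k)"
    proof (rule sum.cong)
      fix i assume "i \<in> {..k}"
      then have "X ^ i * X ^ (k - i) = X ^ k" by (simp flip: power_add)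
      then show "(bc a i *\<^sub>R X ^ i) * (bc b (k - i) *\<^sub>R X ^ (k - i)) = (bc a i * bc b (k - i)) *\<^sub>R X ^ k"
        by simp
    qed simp
    also have "\<dots> = (\<Sum>i\<le>k. bc a i * bc b (k - i)) *\<^sub>R X ^ k" by (simp add: scaleR_sum_left)
    also have "\<dots> = bc (a + b) k *\<^sub>R X ^ k" by (simp add: bc_vandermonde)
    finally show ?thesis .
  qed
  then have "(\<lambda>k. bc (a + b) k *\<^sub>R X ^ k) sums (ser a X * ser b X)" using cp by simp
  then show ?thesis unfolding ser_def by (simp add: sums_iff)
qed

lemma ser_one:
  fixes X :: "'a::cstar_algebra"
  shows "ser 1 X = 1 - X"
proof -
  have "ser 1 X = (\<Sum>n\<in>{0,1}. bc 1 n *\<^sub>R X ^ n)"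
    unfolding ser_def by (rule suminf_finite) (auto simp: bc_one)
  also have "\<dots> = 1 - X" by (simp add: bc_one)
  finally show ?thesis .
qed

lemma ser_adj:
  fixes X :: "'a::cstar_algebra"
  assumes X: "norm X \<le> 1" "adj X = X" and a: "0 \<le> a" "a \<le> 1"
  shows "adj (ser a X) = ser a X"
proof -
  have "adj (ser a X) = (\<Sum>n. adj (bc a n *\<^sub>R X ^ n))"
    unfolding ser_def by (rule bounded_linear.suminf[OF bounded_linear_adj ser_summable[OF X(1) a]])
  also have "\<dots> = ser a X" unfolding ser_def by (simp add: adj_scaleR adj_power X(2))
  finally show ?thesis .
qed

lemma power_comm: "y * X = X * y \<Longrightarrow> y * X ^ n = X ^ n * (y::'a::monoid_mult)"
proof (induct n)
  case (Suc n)
  have "y * X ^ Suc n = (y * X) * X ^ n" by (simp add: mult.assoc)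
  also have "\<dots> = X * (y * X ^ n)" using Suc by (simp add: mult.assoc)
  also have "\<dots> = X ^ Suc n * y" using Suc by (simp add: mult.assoc)
  finally show ?case .
qed simp

lemma ser_comm:
  fixes X :: "'a::cstar_algebra"
  assumes X: "norm X \<le> 1" and a: "0 \<le> a" "a \<le> 1" and c: "y * X = X * y"
  shows "y * ser a X = ser a X * y"
proof -
  have s: "summable (\<lambda>n. bc a n *\<^sub>R X ^ n)" by (rule ser_summable[OF X a])
  have "y * ser a X = (\<Sum>n. y * (bc a n *\<^sub>R X ^ n))" unfolding ser_def by (rule suminf_mult[OF s, symmetric])
  also have "\<dots> = (\<Sum>n. (bc a n *\<^sub>R X ^ n) * y)" using power_comm[OF c] by simp
  also have "\<dots> = ser a X * y" unfolding ser_def by (rule suminf_mult2[OF s, symmetric])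
  finally show ?thesis .
qed

lemma sqrt_exists:
  fixes h :: "'a::cstar_algebra"
  assumes vN: "von_neumann_algebra TYPE('a)" and hh: "adj h = h"
  shows "\<exists>t. adj t = t \<and> (t * t) * (t * t) = h * h \<and> (\<forall>y. y * (h * h) = (h * h) * y \<longrightarrow> y * t = t * y)"
proof (cases "h * h = 0")
  case True then show ?thesis by (intro exI[of _ 0]) simp
next
  case False
  let ?c = "h * h"
  define r where "r = norm ?c"
  have r0: "0 < r" using False unfolding r_def by simp
  have "norm (of_real r - ?c) \<le> r" unfolding r_def by (rule pos_norm[OF vN pos_sq[OF vN hh]]) simp
  define X where "X = (1 / r) *\<^sub>R (of_real r - ?c)"
  have nX: "norm X \<le> 1"
  proof -
    have "norm X = (1 / r) * norm (of_real r - ?c)" unfolding X_def using r0 by simp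
    also have "\<dots> \<le> (1 / r) * r" using \<open>norm (of_real r - ?c) \<le> r\<close> r0 by (intro mult_left_mono) auto
    finally show ?thesis using r0 by simp
  qed
  have hX: "adj X = X" unfolding X_def by (simp add: adj_scaleR adj_mult hh)
  have cX: "?c = of_real r - r *\<^sub>R X" unfolding X_def using r0 by simp
  define t where "t = root 4 r *\<^sub>R ser (1/4) X"
  have ht: "adj t = t" unfolding t_def by (simp add: adj_scaleR ser_adj[OF nX hX])
  have tt: "t * t = (root 4 r * root 4 r) *\<^sub>R ser (1/2) X"
    unfolding t_def using ser_mult[OF nX, of "1/4" "1/4"] by simp
  have "(t * t) * (t * t) = ((root 4 r * root 4 r) * (root 4 r * root 4 r)) *\<^sub>R ser 1 X"
    unfolding tt using ser_mult[OF nX, of "1/2" "1/2"] by simp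
  also have "(root 4 r * root 4 r) * (root 4 r * root 4 r) = r"
  proof -
    have "(root 4 r) ^ 4 = r" using r0 by simp
    then show ?thesis by (simp add: power4_eq_xxxx mult.assoc)
  qed
  also have "r *\<^sub>R ser 1 X = ?c" unfolding ser_one cX by (simp add: scaleR_diff_right of_real_def)
  finally have t4: "(t * t) * (t * t) = ?c" .
  have comm: "y * t = t * y" if yc: "y * ?c = ?c * y" for y
  proof -
    have "y * X = X * y" unfolding X_def using yc by (simp add: algebra_simps of_real_def)
    then show ?thesis unfolding t_def using ser_comm[OF nX, of "1/4" y] by simp
  qed
  show ?thesis using ht t4 comm by blast
qed


lemma sqrt_unique:
  fixes h t y z :: "'a::cstar_algebra"
  assumes vN: "von_neumann_algebra TYPE('a)"
    and ht: "adj t = t" and t4: "(t * t) * (t * t) = h * h"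
    and tc: "\<forall>y. y * (h * h) = (h * h) * y \<longrightarrow> y * t = t * y"
    and yz: "y = adj z * z" and yy: "y * y = h * h"
  shows "y = t * t"
proof -
  let ?s = "t * t"
  have "y * (h * h) = (h * h) * y" unfolding yy[symmetric] by (simp add: mult.assoc)
  then have yt: "y * t = t * y" using tc by blast
  have ys: "y * ?s = ?s * y" using yt by (metis mult.assoc)
  have hy: "adj y = y" unfolding yz by (simp add: adj_mult adj_adj)
  define d where "d = y - ?s"
  have hd: "adj d = d" unfolding d_def by (simp add: hy adj_mult ht)
  have dt: "d * t = t * d" unfolding d_def by (simp add: algebra_simps yt mult.assoc)
  have key: "d * (y + ?s) = 0"
  proof -
    have "d * (y + ?s) = y * y + (y * ?s - ?s * y) - ?s * ?s" unfolding d_def by (simp add: algebra_simps)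
    then show ?thesis using ys yy t4 by simp
  qed
  define u where "u = z * d"
  define w where "w = t * d"
  have hw: "adj w = w" unfolding w_def by (simp add: adj_mult hd ht dt)
  have uu: "adj u * u = d * y * d" unfolding u_def yz by (simp add: adj_mult hd mult.assoc)
  have ww: "w * w = d * ?s * d"
  proof -
    have "w * w = t * (d * t) * d" unfolding w_def by (simp add: mult.assoc)
    also have "\<dots> = ?s * d * d" unfolding dt by (simp add: mult.assoc)
    also have "?s * d = d * ?s" using dt by (metis mult.assoc)
    finally show ?thesis by (simp add: mult.assoc)
  qed
  have "d * y * d + d * ?s * d = 0"
  proof -
    have "d * y * d + d * ?s * d = (d * (y + ?s)) * d" by (simp add: algebra_simps)
    then show ?thesis using key by simp
  qed
  then have "adj u * u = - (w * w)" unfolding uu ww by (simp add: eq_neg_iff_add_eq_0)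
  note nz = neg_square_zero[OF vN hw this]
  have "d * y * d = 0" using nz(1) uu by simp
  moreover have "d * ?s * d = 0" using nz(2) ww by simp
  ultimately have "d * d * d = 0"
  proof -
    assume a1: "d * y * d = 0" and a2: "d * ?s * d = 0"
    have "d * d * d = d * y * d - d * ?s * d" unfolding d_def by (simp add: algebra_simps)
    then show ?thesis using a1 a2 by simp
  qed
  then have "d ^ (2^2) = 0" by (simp add: numeral_eq_Suc mult.assoc)
  then have "norm d ^ (2^2) = 0" using herm_norm_pow2[OF hd, of 2] by simp
  then have "d = 0" by simp
  then show ?thesis unfolding d_def by simp
qed

lemma abs_in_char:
  fixes h y0 :: "'a::cstar_algebra"
  assumes vN: "von_neumann_algebra TYPE('a)" and hh: "adj h = h"
    and p0: "positive_in S y0" and y0: "y0 * y0 = h * h"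
  shows "abs_in S h = y0"
proof -
  obtain t where ht: "adj t = t" and t4: "(t * t) * (t * t) = h * h"
    and tc: "\<forall>y. y * (h * h) = (h * h) * y \<longrightarrow> y * t = t * y"
    using sqrt_exists[OF vN hh] by blast
  have u: "y = t * t" if py: "positive_in S y" and yy2: "y * y = h * h" for y
  proof -
    obtain z where "y = adj z * z" using py unfolding positive_in_def by blast
    then show ?thesis using sqrt_unique[OF vN ht t4 tc _ yy2] by blast
  qed
  show ?thesis unfolding abs_in_def
  proof (rule the_equality)
    show "positive_in S y0 \<and> y0 * y0 = adj h * h" using p0 y0 hh by simp
    fix y assume "positive_in S y \<and> y * y = adj h * h"
    then have "y = t * t" using u hh by simp
    moreover have "y0 = t * t" using u p0 y0 by simp
    ultimately show "y = y0" by simp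
  qed
qed

lemma in_corner:
  fixes p :: "'a::cstar_algebra"
  assumes "projection p" shows "y \<in> corner p \<longleftrightarrow> p * y * p = y"
proof
  assume "y \<in> corner p"
  then obtain x where "y = p * x * p" unfolding corner_def by blast
  moreover have "p * p = p" using assms by (simp add: projection_def)
  ultimately show "p * y * p = y" by (metis mult.assoc)
next
  assume "p * y * p = y" then show "y \<in> corner p" unfolding corner_def by (intro CollectI exI[of _ y]) simp
qed

lemma projection_compl: "projection p \<Longrightarrow> projection (1 - p)"
  unfolding projection_def by (simp add: algebra_simps)

lemma corner_orth:
  fixes p a b :: "'a::cstar_algebra"
  assumes p: "projection p" and a: "a \<in> corner p" and b: "b \<in> corner (1 - p)"
  shows "a * b = 0" "b * a = 0"
proof -
  have pp: "p * p = p" using p by (simp add: projection_def)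
  have pq: "p * (1 - p) = 0" "(1 - p) * p = 0" using pp by (simp_all add: algebra_simps)
  have ea: "a = p * a * p" using a in_corner[OF p] by simp
  have eb: "b = (1 - p) * b * (1 - p)" using b in_corner[OF projection_compl[OF p]] by simp
  have "a * b = p * a * (p * (1 - p)) * b * (1 - p)"
    by (subst ea, subst eb) (simp add: mult.assoc)
  then show "a * b = 0" using pq by simp
  have "b * a = (1 - p) * b * ((1 - p) * p) * a * p"
    by (subst ea, subst eb) (simp add: mult.assoc)
  then show "b * a = 0" using pq by simp
qed

lemma sqrt_in_corner:
  fixes p x t :: "'a::cstar_algebra"
  assumes p: "projection p" and x: "x \<in> corner p" and ht: "adj t = t"
    and t4: "(t * t) * (t * t) = x * x" and hx: "adj x = x"
  shows "t \<in> corner p"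
proof -
  define q where "q = 1 - p"
  have pp: "p * p = p" and hp: "adj p = p" using p by (auto simp: projection_def)
  have hq: "adj q = q" unfolding q_def by (simp add: hp)
  have xq: "x * q = 0" unfolding q_def using corner_orth(1)[OF p x, of "1 - p"]
    by (simp add: in_corner[OF projection_compl[OF p]] pp algebra_simps)
  have qx: "q * x = 0" using arg_cong[OF xq, of adj] by (simp add: adj_mult hx hq)
  let ?s = "t * t"
  have hs: "adj ?s = ?s" by (simp add: adj_mult ht)
  have "adj (?s * q) * (?s * q) = q * (?s * ?s) * q"
    by (simp add: adj_mult ht hq mult.assoc)
  also have "\<dots> = q * (x * x) * q" by (simp only: t4)
  also have "\<dots> = 0" by (simp add: qx flip: mult.assoc)
  finally have "(norm (?s * q))^2 = 0" using cstar_identity[of "?s * q"] by simp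
  then have sq: "?s * q = 0" by simp
  have "adj (t * q) * (t * q) = q * ?s * q" by (simp add: adj_mult ht hq mult.assoc)
  also have "\<dots> = q * (?s * q)" by (simp only: mult.assoc)
  also have "\<dots> = 0" by (simp only: sq mult_zero_right)
  finally have "(norm (t * q))^2 = 0" using cstar_identity[of "t * q"] by simp
  then have tq: "t * q = 0" by simp
  have qt: "q * t = 0" using arg_cong[OF tq, of adj] by (simp add: adj_mult ht hq)
  have "t = t * p" using tq unfolding q_def by (simp add: algebra_simps)
  moreover have "t = p * t" using qt unfolding q_def by (simp add: algebra_simps)
  ultimately have "p * t * p = t" by (metis mult.assoc)
  then show ?thesis using in_corner[OF p] by simp
qed

lemma abs_corner:
  fixes p x :: "'a::cstar_algebra"
  assumes vN: "von_neumann_algebra TYPE('a)" and p: "projection p"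
    and x: "x \<in> corner p" and hx: "adj x = x"
  obtains t where "t \<in> corner p" "adj t = t" "abs_in (corner p) x = t * t" "(t * t) * (t * t) = x * x"
proof -
  obtain t where ht: "adj t = t" and t4: "(t * t) * (t * t) = x * x"
    using sqrt_exists[OF vN hx] by blast
  have tc: "t \<in> corner p" by (rule sqrt_in_corner[OF p x ht t4 hx])
  have "positive_in (corner p) (t * t)" unfolding positive_in_def using tc ht by (metis)
  then have "abs_in (corner p) x = t * t" by (rule abs_in_char[OF vN hx _ t4])
  then show ?thesis using that tc ht t4 by blast
qed

lemma corner_mult_closed:
  fixes p :: "'a::cstar_algebra"
  assumes p: "projection p" and a: "a \<in> corner p" and b: "b \<in> corner p"
  shows "a * b \<in> corner p"
proof -
  have pp: "p * p = p" using p by (simp add: projection_def)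
  have pp': "p * (p * z) = p * z" for z using pp by (simp add: mult.assoc[symmetric])
  have ea: "p * a * p = a" and eb: "p * b * p = b" using a b in_corner[OF p] by auto
  have "p * ((p * a * p) * (p * b * p)) * p = (p * a * p) * (p * b * p)"
    by (simp add: mult.assoc pp' pp)
  then have "p * (a * b) * p = a * b" unfolding ea eb .
  then show ?thesis using in_corner[OF p] by simp
qed

lemma abs_split:
  fixes p x1 x2 :: "'a::cstar_algebra"
  assumes vN: "von_neumann_algebra TYPE('a)" and p: "projection p"
    and x1: "x1 \<in> corner p" and h1: "adj x1 = x1"
    and x2: "x2 \<in> corner (1 - p)" and h2: "adj x2 = x2"
  shows "abs_in UNIV (x1 + x2) = abs_in (corner p) x1 + abs_in (corner (1 - p)) x2"
    "abs_in (corner p) x1 \<in> corner p" "abs_in (corner (1 - p)) x2 \<in> corner (1 - p)"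
proof -
  have q: "projection (1 - p)" by (rule projection_compl[OF p])
  obtain t1 where t1: "t1 \<in> corner p" "adj t1 = t1" "abs_in (corner p) x1 = t1 * t1" "(t1 * t1) * (t1 * t1) = x1 * x1"
    using abs_corner[OF vN p x1 h1] by blast
  obtain t2 where t2: "t2 \<in> corner (1 - p)" "adj t2 = t2" "abs_in (corner (1 - p)) x2 = t2 * t2" "(t2 * t2) * (t2 * t2) = x2 * x2"
    using abs_corner[OF vN q x2 h2] by blast
  have o12: "t1 * t2 = 0" "t2 * t1 = 0" using corner_orth[OF p t1(1) t2(1)] by auto
  have x12: "x1 * x2 = 0" "x2 * x1 = 0" using corner_orth[OF p x1 x2] by auto
  let ?T = "t1 + t2"
  have TT: "adj ?T * ?T = t1 * t1 + t2 * t2"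
    by (simp add: adj_add t1(2) t2(2) algebra_simps o12)
  have "(t1 * t1) * (t2 * t2) = t1 * (t1 * t2) * t2" "(t2 * t2) * (t1 * t1) = t2 * (t2 * t1) * t1"
    by (simp_all add: mult.assoc)
  then have s12: "(t1 * t1) * (t2 * t2) = 0" "(t2 * t2) * (t1 * t1) = 0" using o12 by simp_all
  have "(t1 * t1 + t2 * t2) * (t1 * t1 + t2 * t2) = (x1 + x2) * (x1 + x2)"
    by (simp only: distrib_left distrib_right s12 x12 t1(4) t2(4))
  moreover have "positive_in UNIV (t1 * t1 + t2 * t2)" unfolding positive_in_def using TT by (metis UNIV_I)
  moreover have "adj (x1 + x2) = x1 + x2" by (simp add: adj_add h1 h2)
  ultimately have "abs_in UNIV (x1 + x2) = t1 * t1 + t2 * t2"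
    using abs_in_char[OF vN] by blast
  then show "abs_in UNIV (x1 + x2) = abs_in (corner p) x1 + abs_in (corner (1 - p)) x2"
    using t1(3) t2(3) by simp
  show "abs_in (corner p) x1 \<in> corner p" using t1 corner_mult_closed[OF p] by simp
  show "abs_in (corner (1 - p)) x2 \<in> corner (1 - p)" using t2 corner_mult_closed[OF q] by simp
qed


lemma pos_herm: "positive_in S a \<Longrightarrow> adj a = a"
  unfolding positive_in_def by (auto simp: adj_mult adj_adj)

lemma corner_diff: "projection p \<Longrightarrow> a \<in> corner p \<Longrightarrow> b \<in> corner p \<Longrightarrow> a - b \<in> corner p"
  by (simp add: in_corner algebra_simps)

lemma corner_self: "projection p \<Longrightarrow> p \<in> corner p"
  by (simp add: in_corner projection_def)

lemma corner_zero: "projection p \<Longrightarrow> 0 \<in> corner p"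
  by (simp add: in_corner)

lemma abs_zero:
  fixes p :: "'a::cstar_algebra"
  assumes vN: "von_neumann_algebra TYPE('a)" and p: "projection p"
  shows "abs_in (corner p) 0 = 0"
  by (rule abs_in_char[OF vN]) (use corner_zero[OF p] in \<open>auto simp: positive_in_def intro!: bexI[of _ 0]\<close>)

lemma abs_proj:
  fixes p :: "'a::cstar_algebra"
  assumes vN: "von_neumann_algebra TYPE('a)" and p: "projection p"
  shows "abs_in (corner p) p = p"
proof (rule abs_in_char[OF vN])
  show "adj p = p" using p by (simp add: projection_def)
  show "positive_in (corner p) p" unfolding positive_in_def
    using corner_self[OF p] p by (auto simp: projection_def intro!: bexI[of _ p])
  show "p * p = p * p" ..
qed

lemma split_eq:
  fixes p :: "'a::cstar_algebra"
  assumes p: "projection p" and A: "A \<in> corner p" and B: "B \<in> corner (1 - p)"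
  shows "A + B = 1 \<longleftrightarrow> A = p \<and> B = 1 - p"
proof
  assume e: "A + B = 1"
  have pp: "p * p = p" using p by (simp add: projection_def)
  have q: "projection (1 - p)" by (rule projection_compl[OF p])
  have pB: "p * B * p = 0"
  proof -
    have "p * B = 0" using corner_orth(1)[OF p corner_self[OF p] B] by simp
    then show ?thesis by simp
  qed
  have qA: "(1 - p) * A * (1 - p) = 0"
  proof -
    have "(1 - p) * A = 0" using corner_orth(2)[OF p A corner_self[OF q]] by simp
    then show ?thesis by simp
  qed
  have "p * (A + B) * p = A" using pB A in_corner[OF p] by (simp add: algebra_simps)
  then show "A = p \<and> B = 1 - p"
    using e pp qA B in_corner[OF q] by (metis add_diff_cancel_left' mult_1_left mult_1_right)
next
  assume "A = p \<and> B = 1 - p" then show "A + B = 1" by simp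
qed

lemma corner_compl_sum:
  fixes p a :: "'a::cstar_algebra"
  assumes p: "projection p" and a1: "a1 \<in> corner p" and a2: "a2 \<in> corner (1 - p)"
  shows "p * (a1 + a2) * p = a1" "(1 - p) * (a1 + a2) * (1 - p) = a2"
proof -
  have q: "projection (1 - p)" by (rule projection_compl[OF p])
  have "p * a2 = 0" using corner_orth(1)[OF p corner_self[OF p] a2] by simp
  then show "p * (a1 + a2) * p = a1" using a1 in_corner[OF p] by (simp add: algebra_simps)
  have "(1 - p) * a1 = 0" using corner_orth(2)[OF p a1 corner_self[OF q]] by simp
  then show "(1 - p) * (a1 + a2) * (1 - p) = a2" using a2 in_corner[OF q] by (simp add: algebra_simps)
qed

lemma corner_herm:
  fixes p a :: "'a::cstar_algebra"
  assumes p: "projection p" and ha: "adj a = a"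
  shows "adj (p * a * p) = p * a * p"
  using p ha by (simp add: adj_mult projection_def mult.assoc)


lemma corner_add: "projection p \<Longrightarrow> a \<in> corner p \<Longrightarrow> b \<in> corner p \<Longrightarrow> a + b \<in> corner p"
  by (simp add: in_corner algebra_simps)

theorem lemma2p6:
  fixes a b p :: "'a::cstar_algebra"
  assumes vN: "von_neumann_algebra TYPE('a)"
    and a0: "positive_in UNIV a" and a1: "le_in UNIV a 1"
    and b0: "positive_in UNIV b" and b1: "le_in UNIV b 1"
    and p: "projection p"
  shows "(a \<in> corner p \<and> b \<in> corner p \<longrightarrow>
            (abs_compatible_in UNIV 1 a b \<longleftrightarrow> abs_compatible_in (corner p) p a b))
       \<and> (a \<in> {x + y | x y. x \<in> corner p \<and> y \<in> corner (1 - p)} \<and>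
          b \<in> {x + y | x y. x \<in> corner p \<and> y \<in> corner (1 - p)} \<longrightarrow>
            (abs_compatible_in UNIV 1 a b \<longleftrightarrow>
               abs_compatible_in (corner p) p (p * a * p) (p * b * p) \<and>
               abs_compatible_in (corner (1 - p)) (1 - p)
                  ((1 - p) * a * (1 - p)) ((1 - p) * b * (1 - p))))"
proof (intro conjI impI)
  have ha: "adj a = a" using pos_herm[OF a0] .
  have hb: "adj b = b" using pos_herm[OF b0] .
  have hp: "adj p = p" using p by (simp add: projection_def)
  have q: "projection (1 - p)" by (rule projection_compl[OF p])
  have hq: "adj (1 - p) = 1 - p" by (simp add: hp)
  {
    assume ab: "a \<in> corner p \<and> b \<in> corner p"
    have x1: "a - b \<in> corner p" using ab corner_diff[OF p] by blast
    have hx1: "adj (a - b) = a - b" by (simp add: ha hb)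
    have y1: "p - a - b \<in> corner p" using ab corner_diff[OF p] corner_self[OF p] by metis
    have hy1: "adj (p - a - b) = p - a - b" by (simp add: ha hb hp)
    have e1: "abs_in UNIV (a - b) = abs_in (corner p) (a - b)"
      using abs_split(1)[OF vN p x1 hx1 corner_zero[OF q] adj_zero] abs_zero[OF vN q] by simp
    have e2: "abs_in UNIV (1 - a - b) = abs_in (corner p) (p - a - b) + (1 - p)"
    proof -
      have eq: "(p - a - b) + (1 - p) = 1 - a - b" by simp
      have "abs_in UNIV ((p - a - b) + (1 - p)) = abs_in (corner p) (p - a - b) + abs_in (corner (1 - p)) (1 - p)"
        by (rule abs_split(1)[OF vN p y1 hy1 corner_self[OF q] hq])
      then show ?thesis unfolding eq abs_proj[OF vN q] .
    qed
    show "abs_compatible_in UNIV 1 a b \<longleftrightarrow> abs_compatible_in (corner p) p a b"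
      unfolding abs_compatible_in_def e1 e2
      by (simp add: algebra_simps)
  }
  {
    assume ab: "a \<in> {x + y | x y. x \<in> corner p \<and> y \<in> corner (1 - p)} \<and>
          b \<in> {x + y | x y. x \<in> corner p \<and> y \<in> corner (1 - p)}"
    then obtain a1 a2 b1 b2 where A: "a = a1 + a2" "a1 \<in> corner p" "a2 \<in> corner (1 - p)"
      and B: "b = b1 + b2" "b1 \<in> corner p" "b2 \<in> corner (1 - p)" by blast
    have pa: "p * a * p = a1" "(1 - p) * a * (1 - p) = a2"
      using corner_compl_sum[OF p A(2,3)] A(1) by auto
    have pb: "p * b * p = b1" "(1 - p) * b * (1 - p) = b2"
      using corner_compl_sum[OF p B(2,3)] B(1) by auto
    have ha1: "adj a1 = a1" using corner_herm[OF p ha] pa by simp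
    have ha2: "adj a2 = a2" using corner_herm[OF q ha] pa by simp
    have hb1: "adj b1 = b1" using corner_herm[OF p hb] pb by simp
    have hb2: "adj b2 = b2" using corner_herm[OF q hb] pb by simp
    have x1: "a1 - b1 \<in> corner p" using A B corner_diff[OF p] by blast
    have x2: "a2 - b2 \<in> corner (1 - p)" using A B corner_diff[OF q] by blast
    have y1: "p - a1 - b1 \<in> corner p" using A B corner_diff[OF p] corner_self[OF p] by metis
    have y2: "(1 - p) - a2 - b2 \<in> corner (1 - p)" using A B corner_diff[OF q] corner_self[OF q] by metis
    have sx1: "abs_in UNIV ((a1 - b1) + (a2 - b2)) = abs_in (corner p) (a1 - b1) + abs_in (corner (1 - p)) (a2 - b2)"
      "abs_in (corner p) (a1 - b1) \<in> corner p" "abs_in (corner (1 - p)) (a2 - b2) \<in> corner (1 - p)"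
      using abs_split[OF vN p x1 _ x2] ha1 ha2 hb1 hb2 by simp_all
    have sy1: "abs_in UNIV ((p - a1 - b1) + ((1 - p) - a2 - b2)) = abs_in (corner p) (p - a1 - b1) + abs_in (corner (1 - p)) ((1 - p) - a2 - b2)"
      "abs_in (corner p) (p - a1 - b1) \<in> corner p" "abs_in (corner (1 - p)) ((1 - p) - a2 - b2) \<in> corner (1 - p)"
      using abs_split[OF vN p y1 _ y2] ha1 ha2 hb1 hb2 hp by simp_all
    have e1: "a - b = (a1 - b1) + (a2 - b2)" using A B by simp
    have e2: "1 - a - b = (p - a1 - b1) + ((1 - p) - a2 - b2)" using A B by simp
    let ?A1 = "abs_in (corner p) (a1 - b1)" and ?A2 = "abs_in (corner (1 - p)) (a2 - b2)"
    let ?B1 = "abs_in (corner p) (p - a1 - b1)" and ?B2 = "abs_in (corner (1 - p)) ((1 - p) - a2 - b2)"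
    have "abs_compatible_in UNIV 1 a b \<longleftrightarrow> (?A1 + ?B1) + (?A2 + ?B2) = 1"
      unfolding abs_compatible_in_def e1 e2 sx1(1) sy1(1) by (simp add: algebra_simps)
    also have "\<dots> \<longleftrightarrow> ?A1 + ?B1 = p \<and> ?A2 + ?B2 = 1 - p"
      by (rule split_eq[OF p]) (use corner_add[OF p] corner_add[OF q] sx1 sy1 in blast)+
    also have "\<dots> \<longleftrightarrow> abs_compatible_in (corner p) p (p * a * p) (p * b * p) \<and>
               abs_compatible_in (corner (1 - p)) (1 - p) ((1 - p) * a * (1 - p)) ((1 - p) * b * (1 - p))"
      unfolding abs_compatible_in_def pa pb by simp
    finally show "abs_compatible_in UNIV 1 a b \<longleftrightarrow>
               abs_compatible_in (corner p) p (p * a * p) (p * b * p) \<and>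
               abs_compatible_in (corner (1 - p)) (1 - p) ((1 - p) * a * (1 - p)) ((1 - p) * b * (1 - p))" .
  }
qed


end
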